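(* Let $\mathbf{X}=\{\mathbf{x}\in\mathbb{R}^n:g_1(\mathbf{x})\ge0,\dots,g_m(\mathbf{x})\ge0\}$ be compact, with $g_j\in\mathbb{R}[\mathbf{x}]$, and let $p_1,\dots,p_t,q_1,\dots,q_t\in\mathbb{R}[\mathbf{x}]$ with each $q_i$ positive on $\mathbf{X}$. Let $f_{\min}=\inf_{\mathbf{x}\in\mathbf{X}}\sum_{i=1}^t p_i(\mathbf{x})/q_i(\mathbf{x})$ and $$f_{\mathrm{meas}}=\inf_{\mu_1,\dots,\mu_t\in\mathscr{M}_+(\mathbf{X})}\Big\{\sum_{i=1}^t\int_{\mathbf{X}}p_i\,\mathrm{d}\mu_i:\ \int_{\mathbf{X}}\mathbf{x}^{\alpha}q_i\,\mathrm{d}\mu_i=\int_{\mathbf{X}}\mathbf{x}^{\alpha}q_1\,\mathrm{d}\mu_1\ \ (\alpha\in\mathbb{N}^n,\ i=2,\dots,t),\ \int_{\mathbf{X}}q_1\,\mathrm{d}\mu_1=1\Big\}.$$ Then $f_{\mathrm{meas}}=f_{\min}$.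
   Context: $\mathscr{M}_+(\mathbf{X})$ denotes the cone of finite nonnegative Borel measures supported on $\mathbf{X}$; $\mathbf{x}^\alpha=x_1^{\alpha_1}\cdots x_n^{\alpha_n}$. *)

theory Defs
  imports "HOL-Analysis.Analysis"
begin

definition monomial :: "('n::finite \<Rightarrow> nat) \<Rightarrow> real^'n \<Rightarrow> real" where
  "monomial \<alpha> x = (\<Prod>i\<in>UNIV. (x $ i) ^ (\<alpha> i))"

definition is_poly :: "(real^'n::finite \<Rightarrow> real) \<Rightarrow> bool" where
  "is_poly f \<longleftrightarrow> (\<exists>A c. finite A \<and> f = (\<lambda>x. \<Sum>\<alpha>\<in>A. c \<alpha> * monomial \<alpha> x))"

definition meas_on :: "(real^'n::finite) set \<Rightarrow> (real^'n) measure \<Rightarrow> bool" where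
  "meas_on X \<mu> \<longleftrightarrow> sets \<mu> = sets borel \<and> finite_measure \<mu> \<and> emeasure \<mu> (space \<mu> - X) = 0"

end

theory Submission
  imports Defs "HOL-Probability.Probability"
begin


lemma monomial_cont: "continuous_on S (monomial \<alpha>)"
  unfolding monomial_def[abs_def] by (intro continuous_intros)

lemma is_poly_cont: "is_poly f \<Longrightarrow> continuous_on S f"
proof -
  assume "is_poly f"
  then obtain A c where f: "f = (\<lambda>x. \<Sum>\<alpha>\<in>A. c \<alpha> * monomial \<alpha> x)" unfolding is_poly_def by blast
  show ?thesis unfolding f
    by (intro continuous_on_sum continuous_on_mult continuous_on_const monomial_cont)
qed

lemma monomial_shift:
  "monomial (\<lambda>i. \<alpha> i + (if i = j then 1 else 0)) x = monomial \<alpha> x * x $ j"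
proof -
  have "monomial (\<lambda>i. \<alpha> i + (if i = j then 1 else 0)) x
     = (\<Prod>i\<in>UNIV. (x $ i) ^ \<alpha> i * (if i = j then x $ i else 1))"
    unfolding monomial_def by (intro prod.cong) (auto simp: power_add)
  also have "\<dots> = monomial \<alpha> x * x $ j"
    unfolding monomial_def prod.distrib by (simp add: prod.delta)
  finally show ?thesis .
qed

lemma monomial_zero: "monomial (\<lambda>i. 0) x = 1"
  unfolding monomial_def by simp

lemma linear_expand:
  fixes f :: "real^'n::finite \<Rightarrow> real"
  assumes "bounded_linear f"
  shows "f x = (\<Sum>j\<in>UNIV. f (axis j 1) * x $ j)"
proof -
  interpret linear f using assms bounded_linear.linear by blast
  have "f x = f (\<Sum>j\<in>UNIV. (x$j) *s axis j 1)" by (simp add: basis_expansion)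
  also have "\<dots> = (\<Sum>j\<in>UNIV. f ((x$j) *s axis j 1))" by (simp add: sum)
  also have "\<dots> = (\<Sum>j\<in>UNIV. f (axis j 1) * x $ j)"
    by (intro sum.cong refl) (simp add: scalar_mult_eq_scaleR scale)
  finally show ?thesis .
qed

lemma set_integrable_cont:
  fixes h :: "real^'n::finite \<Rightarrow> real"
  assumes M: "meas_on X M" and X: "compact X" and h: "continuous_on X h"
  shows "set_integrable M X h"
proof -
  interpret finite_measure M using M meas_on_def by blast
  have sM: "sets M = sets borel" using M meas_on_def by blast
  have Xb: "X \<in> sets borel" using X by (simp add: borel_compact)
  have "(\<lambda>x. indicator X x *\<^sub>R h x) \<in> borel_measurable borel"
    by (rule borel_measurable_continuous_on_indicator[OF Xb h])
  then have meas: "(\<lambda>x. indicator X x *\<^sub>R h x) \<in> borel_measurable M"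
    using sM measurable_cong_sets by blast
  have "bounded (h ` X)" using compact_imp_bounded[OF compact_continuous_image[OF h X]] .
  then obtain B where "\<forall>y\<in>h ` X. norm y \<le> B" unfolding bounded_iff by blast
  then have B: "\<forall>x\<in>X. norm (h x) \<le> B" by auto
  have "\<forall>x. norm (indicator X x *\<^sub>R h x) \<le> max B 0"
    using B by (auto simp: indicator_def)
  then have "AE x in M. norm (indicator X x *\<^sub>R h x) \<le> max B 0" by (intro AE_I2) blast
  then show ?thesis unfolding set_integrable_def
    by (rule integrable_const_bound[OF _ meas])
qed

lemma dirac_integral:
  fixes h :: "real^'n::finite \<Rightarrow> real"
  assumes x0: "x0 \<in> X" and Xb: "X \<in> sets borel" and c: "c \<ge> 0"
    and h: "(\<lambda>x. indicator X x *\<^sub>R h x) \<in> borel_measurable borel"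
  shows "(LINT x:X|density (return borel x0) (\<lambda>_. ennreal c). h x) = c * h x0"
proof -
  have hM: "(\<lambda>x. indicator X x *\<^sub>R h x) \<in> borel_measurable (return borel x0)"
    using h by simp
  have "(LINT x:X|density (return borel x0) (\<lambda>_. ennreal c). h x)
      = integral\<^sup>L (return borel x0) (\<lambda>x. c *\<^sub>R (indicator X x *\<^sub>R h x))"
    unfolding set_lebesgue_integral_def
    by (rule integral_density[OF hM]) (use c in auto)
  also have "\<dots> = c *\<^sub>R (indicator X x0 *\<^sub>R h x0)"
    by (rule integral_return) (use hM in auto)
  also have "\<dots> = c * h x0" using x0 by simp
  finally show ?thesis .
qed

lemma dirac_meas_on:
  fixes x0 :: "real^'n::finite"
  assumes x0: "x0 \<in> X" and Xb: "X \<in> sets borel"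
  shows "meas_on X (density (return borel x0) (\<lambda>_. ennreal c))"
  unfolding meas_on_def
proof (intro conjI)
  show "sets (density (return borel x0) (\<lambda>_. ennreal c)) = sets borel" by simp
  show "finite_measure (density (return borel x0) (\<lambda>_. ennreal c))"
    by (intro finite_measureI) (simp add: emeasure_density nn_integral_return)
  show "emeasure (density (return borel x0) (\<lambda>_. ennreal c)) (space (density (return borel x0) (\<lambda>_. ennreal c)) - X) = 0"
  proof -
    have sX: "UNIV - X \<in> sets (return borel x0)" using Xb by auto
    have "emeasure (density (return borel x0) (\<lambda>_. ennreal c)) (UNIV - X)
        = (\<integral>\<^sup>+ x. ennreal c * indicator (UNIV - X) x \<partial>return borel x0)"
      by (rule emeasure_density[OF _ sX]) simp
    also have "\<dots> = ennreal c * indicator (UNIV - X) x0"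
      by (rule nn_integral_return) (use sX in auto)
    also have "\<dots> = 0" using x0 by simp
    finally show ?thesis by simp
  qed
qed



lemma set_integral_sum_cont:
  fixes g :: "'j \<Rightarrow> real^'n::finite \<Rightarrow> real"
  assumes M: "meas_on X M" and X: "compact X"
  shows "finite S \<Longrightarrow> (\<forall>j\<in>S. continuous_on X (g j)) \<Longrightarrow>
    (LINT x:X|M. (\<Sum>j\<in>S. g j x)) = (\<Sum>j\<in>S. (LINT x:X|M. g j x))"
proof (induction S rule: finite_induct)
  case empty
  then show ?case by simp
next
  case (insert a S)
  have i1: "set_integrable M X (g a)"
    using insert.prems by (intro set_integrable_cont[OF M X]) auto
  have i2: "set_integrable M X (\<lambda>x. \<Sum>j\<in>S. g j x)"
    using insert.prems by (intro set_integrable_cont[OF M X] continuous_on_sum) auto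
  have "(LINT x:X|M. (\<Sum>j\<in>insert a S. g j x)) = (LINT x:X|M. g a x + (\<Sum>j\<in>S. g j x))"
    using insert.hyps by simp
  also have "\<dots> = (LINT x:X|M. g a x) + (LINT x:X|M. (\<Sum>j\<in>S. g j x))"
    by (rule set_integral_add(2)[OF i1 i2])
  also have "\<dots> = (LINT x:X|M. g a x) + (\<Sum>j\<in>S. (LINT x:X|M. g j x))"
    using insert by simp
  finally show ?case using insert.hyps by simp
qed

lemma lin_case:
  fixes f k w :: "real^'n::finite \<Rightarrow> real"
  assumes M: "meas_on X M" and X: "compact X" and w: "continuous_on X w"
    and k: "continuous_on X k" and f: "bounded_linear f"
  shows "(LINT x:X|M. monomial \<alpha> x * (k x * f x) * w x)
       = (\<Sum>j\<in>UNIV. f (axis j 1) * (LINT x:X|M. monomial (\<lambda>i. \<alpha> i + (if i = j then 1 else 0)) x * k x * w x))"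
proof -
  have pt: "monomial \<alpha> x * (k x * f x) * w x
      = (\<Sum>j\<in>UNIV. f (axis j 1) * (monomial (\<lambda>i. \<alpha> i + (if i = j then 1 else 0)) x * k x * w x))" for x
    unfolding monomial_shift linear_expand[OF f, of x] sum_distrib_left sum_distrib_right
    by (intro sum.cong refl) (simp add: algebra_simps)
  have "(LINT x:X|M. monomial \<alpha> x * (k x * f x) * w x)
      = (LINT x:X|M. (\<Sum>j\<in>UNIV. f (axis j 1) * (monomial (\<lambda>i. \<alpha> i + (if i = j then 1 else 0)) x * k x * w x)))"
    by (simp only: pt)
  also have "\<dots> = (\<Sum>j\<in>UNIV. (LINT x:X|M. f (axis j 1) * (monomial (\<lambda>i. \<alpha> i + (if i = j then 1 else 0)) x * k x * w x)))"
    by (rule set_integral_sum_cont[OF M X]) (auto intro!: continuous_intros monomial_cont k w)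
  also have "\<dots> = (\<Sum>j\<in>UNIV. f (axis j 1) * (LINT x:X|M. monomial (\<lambda>i. \<alpha> i + (if i = j then 1 else 0)) x * k x * w x))"
    by simp
  finally show ?thesis .
qed

definition PP :: "(real^'n::finite) set \<Rightarrow> (real^'n) measure \<Rightarrow> (real^'n \<Rightarrow> real) \<Rightarrow> (real^'n) measure \<Rightarrow> (real^'n \<Rightarrow> real) \<Rightarrow> (real^'n \<Rightarrow> real) \<Rightarrow> bool" where
  "PP X M1 w1 M2 w2 k \<longleftrightarrow> continuous_on X k \<and>
     (\<forall>\<alpha>. (LINT x:X|M2. monomial \<alpha> x * k x * w2 x) = (LINT x:X|M1. monomial \<alpha> x * k x * w1 x))"

lemma PP_poly:
  fixes w1 w2 :: "real^'n::finite \<Rightarrow> real"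
  assumes M1: "meas_on X M1" and M2: "meas_on X M2" and X: "compact X"
    and w1: "continuous_on X w1" and w2: "continuous_on X w2"
  shows "real_polynomial_function g \<Longrightarrow> PP X M1 w1 M2 w2 k \<Longrightarrow> PP X M1 w1 M2 w2 (\<lambda>x. k x * g x)"
proof (induction g arbitrary: k rule: real_polynomial_function.induct)
  case (linear f)
  have k: "continuous_on X k" using linear.prems PP_def by blast
  have fc: "continuous_on X f" using linear.hyps linear_continuous_on by blast
  show ?case unfolding PP_def
  proof (intro conjI allI)
    show "continuous_on X (\<lambda>x. k x * f x)" using k fc by (intro continuous_intros)
    fix \<alpha>
    show "(LINT x:X|M2. monomial \<alpha> x * (k x * f x) * w2 x) = (LINT x:X|M1. monomial \<alpha> x * (k x * f x) * w1 x)"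
      unfolding lin_case[OF M1 X w1 k linear.hyps] lin_case[OF M2 X w2 k linear.hyps]
      using linear.prems unfolding PP_def by simp
  qed
next
  case (const c)
  then show ?case unfolding PP_def
    by (auto intro!: continuous_intros simp: mult.assoc mult.left_commute[of _ c])
next
  case (add f g)
  have A: "PP X M1 w1 M2 w2 (\<lambda>x. k x * f x)" using add by blast
  have B: "PP X M1 w1 M2 w2 (\<lambda>x. k x * g x)" using add by blast
  have cA: "continuous_on X (\<lambda>x. k x * f x)" and cB: "continuous_on X (\<lambda>x. k x * g x)"
    using A B unfolding PP_def by auto
  have split: "(LINT x:X|M. monomial \<alpha> x * (k x * (f x + g x)) * w x)
     = (LINT x:X|M. monomial \<alpha> x * (k x * f x) * w x) + (LINT x:X|M. monomial \<alpha> x * (k x * g x) * w x)"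
    if M: "meas_on X M" and w: "continuous_on X w" for M w \<alpha>
  proof -
    have i1: "set_integrable M X (\<lambda>x. monomial \<alpha> x * (k x * f x) * w x)"
      by (intro set_integrable_cont[OF M X] continuous_intros monomial_cont cA w)
    have i2: "set_integrable M X (\<lambda>x. monomial \<alpha> x * (k x * g x) * w x)"
      by (intro set_integrable_cont[OF M X] continuous_intros monomial_cont cB w)
    have "(LINT x:X|M. monomial \<alpha> x * (k x * (f x + g x)) * w x)
       = (LINT x:X|M. monomial \<alpha> x * (k x * f x) * w x + monomial \<alpha> x * (k x * g x) * w x)"
      by (simp add: algebra_simps)
    also have "\<dots> = (LINT x:X|M. monomial \<alpha> x * (k x * f x) * w x) + (LINT x:X|M. monomial \<alpha> x * (k x * g x) * w x)"
      by (rule set_integral_add(2)[OF i1 i2])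
    finally show ?thesis .
  qed
  show ?case unfolding PP_def
  proof (intro conjI allI)
    show "continuous_on X (\<lambda>x. k x * (f x + g x))"
      using cA cB by (simp add: distrib_left continuous_on_add)
    fix \<alpha>
    show "(LINT x:X|M2. monomial \<alpha> x * (k x * (f x + g x)) * w2 x) = (LINT x:X|M1. monomial \<alpha> x * (k x * (f x + g x)) * w1 x)"
      unfolding split[OF M1 w1] split[OF M2 w2] using A B unfolding PP_def by simp
  qed
next
  case (mult f g)
  have "PP X M1 w1 M2 w2 (\<lambda>x. (k x * f x) * g x)" using mult by blast
  then show ?case by (simp add: mult.assoc)
qed



lemma bound_lemma:
  fixes d w :: "real^'n::finite \<Rightarrow> real"
  assumes M: "meas_on X M" and X: "compact X" and d: "continuous_on X d" and w: "continuous_on X w"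
    and wpos: "\<forall>x\<in>X. w x \<ge> 0" and de: "\<forall>x\<in>X. \<bar>d x\<bar> \<le> e"
  shows "\<bar>LINT x:X|M. d x * w x\<bar> \<le> e * (LINT x:X|M. w x)"
proof -
  have i1: "set_integrable M X (\<lambda>x. d x * w x)" by (intro set_integrable_cont[OF M X] continuous_intros d w)
  have i2: "set_integrable M X (\<lambda>x. e * w x)" by (intro set_integrable_cont[OF M X] continuous_intros w)
  have i3: "set_integrable M X (\<lambda>x. - (d x * w x))" by (intro set_integrable_cont[OF M X] continuous_intros d w)
  have pt1: "d x * w x \<le> e * w x" if "x \<in> X" for x
    using de wpos that by (intro mult_right_mono) auto
  have pt2: "- (d x * w x) \<le> e * w x" if "x \<in> X" for x
  proof -
    have "- d x \<le> e" using de that by auto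
    then have "- d x * w x \<le> e * w x" using wpos that by (intro mult_right_mono) auto
    then show ?thesis by simp
  qed
  have a: "(LINT x:X|M. d x * w x) \<le> e * (LINT x:X|M. w x)"
    using set_integral_mono[OF i1 i2 pt1] by simp
  have "(LINT x:X|M. - (d x * w x)) \<le> e * (LINT x:X|M. w x)"
    using set_integral_mono[OF i3 i2 pt2] by simp
  then have b: "- (LINT x:X|M. d x * w x) \<le> e * (LINT x:X|M. w x)"
    using set_integral_uminus[OF i1] by simp
  show ?thesis using a b by linarith
qed

lemma dens_lemma:
  fixes w1 w2 h :: "real^'n::finite \<Rightarrow> real"
  assumes M1: "meas_on X M1" and M2: "meas_on X M2" and X: "compact X"
    and w1: "continuous_on X w1" and w2: "continuous_on X w2"
    and w1p: "\<forall>x\<in>X. w1 x \<ge> 0" and w2p: "\<forall>x\<in>X. w2 x \<ge> 0"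
    and mom: "\<forall>\<alpha>. (LINT x:X|M2. monomial \<alpha> x * w2 x) = (LINT x:X|M1. monomial \<alpha> x * w1 x)"
    and h: "continuous_on X h"
  shows "(LINT x:X|M2. h x * w2 x) = (LINT x:X|M1. h x * w1 x)"
proof -
  have P1: "PP X M1 w1 M2 w2 (\<lambda>x. 1)" unfolding PP_def using mom by simp
  have polyeq: "(LINT x:X|M2. g x * w2 x) = (LINT x:X|M1. g x * w1 x)" if g: "real_polynomial_function g" for g
  proof -
    have "PP X M1 w1 M2 w2 (\<lambda>x. 1 * g x)" by (rule PP_poly[OF M1 M2 X w1 w2 g P1])
    then have "(LINT x:X|M2. monomial (\<lambda>i. 0) x * (1 * g x) * w2 x) = (LINT x:X|M1. monomial (\<lambda>i. 0) x * (1 * g x) * w1 x)"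
      unfolding PP_def by blast
    then show ?thesis by (simp add: monomial_zero)
  qed
  have gc: "continuous_on X g" if "real_polynomial_function g" for g :: "real^'n \<Rightarrow> real"
    using that continuous_on_polymonial_function real_polynomial_function_eq by blast
  have Ceq: "(LINT x:X|M2. w2 x) = (LINT x:X|M1. w1 x)"
    using mom[rule_format, of "\<lambda>i. 0"] by (simp add: monomial_zero)
  define C where "C = (LINT x:X|M1. w1 x)"
  have C0: "C \<ge> 0"
  proof -
    have "(LINT x:X|M1. 0 * w1 x) \<le> (LINT x:X|M1. 1 * w1 x)"
      by (rule set_integral_mono) (use w1p in \<open>auto intro!: set_integrable_cont[OF M1 X] continuous_intros w1\<close>)
    then show ?thesis unfolding C_def by simp
  qed
  have diff: "(LINT x:X|M. h x * w x) - (LINT x:X|M. g x * w x) = (LINT x:X|M. (h x - g x) * w x)"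
    if M: "meas_on X M" and w: "continuous_on X w" and g: "continuous_on X g" for M w g
  proof -
    have i1: "set_integrable M X (\<lambda>x. h x * w x)" by (intro set_integrable_cont[OF M X] continuous_intros h w)
    have i2: "set_integrable M X (\<lambda>x. g x * w x)" by (intro set_integrable_cont[OF M X] continuous_intros g w)
    show ?thesis using set_integral_diff(2)[OF i1 i2] by (simp add: left_diff_distrib)
  qed
  define D where "D = (LINT x:X|M2. h x * w2 x) - (LINT x:X|M1. h x * w1 x)"
  have bnd: "\<bar>D\<bar> \<le> 2 * e * C" if e: "e > 0" for e
  proof -
    obtain g where g: "real_polynomial_function g" and ge: "\<And>x. x \<in> X \<Longrightarrow> \<bar>h x - g x\<bar> < e"
      using Stone_Weierstrass_real_polynomial_function[OF X h e] by blast
    have gc': "continuous_on X g" using gc[OF g] .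
    have dc: "continuous_on X (\<lambda>x. h x - g x)" by (intro continuous_intros h gc')
    have de: "\<forall>x\<in>X. \<bar>h x - g x\<bar> \<le> e" using ge less_imp_le by blast
    have b1: "\<bar>LINT x:X|M2. (h x - g x) * w2 x\<bar> \<le> e * C"
      using bound_lemma[OF M2 X dc w2 w2p de] Ceq C_def by simp
    have b2: "\<bar>LINT x:X|M1. (h x - g x) * w1 x\<bar> \<le> e * C"
      using bound_lemma[OF M1 X dc w1 w1p de] C_def by simp
    have "D = ((LINT x:X|M2. h x * w2 x) - (LINT x:X|M2. g x * w2 x))
             - ((LINT x:X|M1. h x * w1 x) - (LINT x:X|M1. g x * w1 x))"
      unfolding D_def using polyeq[OF g] by simp
    also have "\<dots> = (LINT x:X|M2. (h x - g x) * w2 x) - (LINT x:X|M1. (h x - g x) * w1 x)"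
      using diff[OF M2 w2 gc'] diff[OF M1 w1 gc'] by simp
    finally show ?thesis using b1 b2 by linarith
  qed
  have "D = 0"
  proof (rule ccontr)
    assume "D \<noteq> 0"
    then have Dp: "\<bar>D\<bar> > 0" by simp
    define e where "e = \<bar>D\<bar> / (2 * (C + 1))"
    have ep: "e > 0" unfolding e_def using Dp C0 by simp
    have "2 * e * C = \<bar>D\<bar> * (C / (C + 1))" unfolding e_def using C0 by (simp add: field_simps)
    also have "\<dots> < \<bar>D\<bar> * 1" using Dp C0 by (intro mult_strict_left_mono) auto
    finally show False using bnd[OF ep] by simp
  qed
  then show ?thesis unfolding D_def by simp
qed



theorem theorem3p6:
  fixes g :: "nat \<Rightarrow> real^'n::finite \<Rightarrow> real" and m :: nat
    and p q :: "nat \<Rightarrow> real^'n \<Rightarrow> real" and t :: nat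
    and X :: "(real^'n) set"
  assumes X_def: "X = {x. \<forall>j\<in>{1..m}. g j x \<ge> 0}"
    and X_compact: "compact X"
    and g_poly: "\<forall>j\<in>{1..m}. is_poly (g j)"
    and t_pos: "t \<ge> 1"
    and p_poly: "\<forall>i\<in>{1..t}. is_poly (p i)"
    and q_poly: "\<forall>i\<in>{1..t}. is_poly (q i)"
    and q_pos: "\<forall>i\<in>{1..t}. \<forall>x\<in>X. q i x > 0"
  shows "Inf {(\<Sum>i=1..t. (LINT x:X|\<mu> i. p i x)) | \<mu>.
              (\<forall>i\<in>{1..t}. meas_on X (\<mu> i))
            \<and> (\<forall>\<alpha>. \<forall>i\<in>{2..t}. (LINT x:X|\<mu> i. monomial \<alpha> x * q i x)
                                 = (LINT x:X|\<mu> 1. monomial \<alpha> x * q 1 x))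
            \<and> (LINT x:X|\<mu> 1. q 1 x) = 1}
       = Inf ((\<lambda>x. \<Sum>i=1..t. p i x / q i x) ` X)"
    (is "Inf ?S = Inf (?F ` X)")
proof (cases "X = {}")
  case True
  have Se: "?S = {}"
  proof -
    have "(LINT x:X|M. q 1 x) = 0" for M :: "(real^'n) measure"
      unfolding True set_lebesgue_integral_def by simp
    then show ?thesis by auto
  qed
  have Fe: "?F ` X = {}" using True by simp
  show ?thesis by (simp only: Se Fe)
next
  case False
  have Xb: "X \<in> sets borel" using X_compact by (simp add: borel_compact)
  have one: "1 \<in> {1..t}" using t_pos by simp
  have qp: "q i x > 0" if "i \<in> {1..t}" "x \<in> X" for i x using q_pos that by blast
  have pc: "continuous_on S (p i)" if "i \<in> {1..t}" for i S
    using p_poly that is_poly_cont by blast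
  have qc: "continuous_on S (q i)" if "i \<in> {1..t}" for i S
    using q_poly that is_poly_cont by blast
  have pqc: "continuous_on X (\<lambda>x. p i x / q i x)" if i: "i \<in> {1..t}" for i
  proof (intro continuous_on_divide pc[OF i] qc[OF i] ballI)
    fix x assume "x \<in> X" then show "q i x \<noteq> 0" using qp[OF i] by fastforce
  qed
  have Fc: "continuous_on X ?F"
    using pqc by (intro continuous_on_sum) auto
  obtain x0 where x0: "x0 \<in> X" and x0min: "\<forall>y\<in>X. ?F x0 \<le> ?F y"
    using continuous_attains_inf[OF X_compact False Fc] by blast
  have R: "Inf (?F ` X) = ?F x0"
    by (rule cInf_eq_minimum) (use x0 x0min in auto)
  have mem: "?F x0 \<in> ?S"
  proof -
    define \<mu> where "\<mu> = (\<lambda>i. density (return borel x0) (\<lambda>_. ennreal (1 / q i x0)))"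
    have int: "(LINT x:X|\<mu> i. h x) = (1 / q i x0) * h x0"
      if i: "i \<in> {1..t}" and h: "continuous_on X h" for i h
      unfolding \<mu>_def
      by (rule dirac_integral[OF x0 Xb]) (use qp[OF i x0] x0 i borel_measurable_continuous_on_indicator[OF Xb h] in auto)
    have f1: "(\<forall>i\<in>{1..t}. meas_on X (\<mu> i))"
      unfolding \<mu>_def using dirac_meas_on[OF x0 Xb] by blast
    have f2: "(\<forall>\<alpha>. \<forall>i\<in>{2..t}. (LINT x:X|\<mu> i. monomial \<alpha> x * q i x)
                                 = (LINT x:X|\<mu> 1. monomial \<alpha> x * q 1 x))"
    proof (intro allI ballI)
      fix \<alpha> i assume i: "i \<in> {2..t}"
      then have i': "i \<in> {1..t}" by auto
      have "(LINT x:X|\<mu> i. monomial \<alpha> x * q i x) = monomial \<alpha> x0"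
        using int[OF i' continuous_on_mult[OF monomial_cont qc[OF i']]] qp[OF i' x0] by simp
      moreover have "(LINT x:X|\<mu> 1. monomial \<alpha> x * q 1 x) = monomial \<alpha> x0"
        using int[OF one continuous_on_mult[OF monomial_cont qc[OF one]]] qp[OF one x0] by simp
      ultimately show "(LINT x:X|\<mu> i. monomial \<alpha> x * q i x) = (LINT x:X|\<mu> 1. monomial \<alpha> x * q 1 x)"
        by simp
    qed
    have f3: "(LINT x:X|\<mu> 1. q 1 x) = 1"
      using int[OF one qc[OF one]] qp[OF one x0] x0 one by auto
    have f4: "?F x0 = (\<Sum>i=1..t. (LINT x:X|\<mu> i. p i x))"
    proof (intro sum.cong refl)
      fix i assume i: "i \<in> {1..t}"
      show "p i x0 / q i x0 = (LINT x:X|\<mu> i. p i x)" using int[OF i pc[OF i]] by simp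
    qed
    show ?thesis unfolding mem_Collect_eq
      by (rule exI[of _ \<mu>]) (intro conjI f1 f2 f3 f4)
  qed
  have low: "?F x0 \<le> s" if s: "s \<in> ?S" for s
  proof -
    obtain \<mu> where s_eq: "s = (\<Sum>i=1..t. (LINT x:X|\<mu> i. p i x))"
      and mo: "\<forall>i\<in>{1..t}. meas_on X (\<mu> i)"
      and mom: "\<forall>\<alpha>. \<forall>i\<in>{2..t}. (LINT x:X|\<mu> i. monomial \<alpha> x * q i x)
                                 = (LINT x:X|\<mu> 1. monomial \<alpha> x * q 1 x)"
      and norm1: "(LINT x:X|\<mu> 1. q 1 x) = 1"
      using s by blast
    have M1: "meas_on X (\<mu> 1)" using mo one by blast
    have each: "(LINT x:X|\<mu> i. p i x) = (LINT x:X|\<mu> 1. (p i x / q i x) * q 1 x)"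
      if i: "i \<in> {1..t}" for i
    proof -
      have Mi: "meas_on X (\<mu> i)" using mo i by blast
      have "(LINT x:X|\<mu> i. p i x) = (LINT x:X|\<mu> i. (p i x / q i x) * q i x)"
      proof (rule set_lebesgue_integral_cong)
        show "X \<in> sets (\<mu> i)" using Mi Xb unfolding meas_on_def by simp
        show "\<forall>x. x \<in> X \<longrightarrow> p i x = p i x / q i x * q i x"
        proof (intro allI impI)
          fix x assume "x \<in> X"
          then have "q i x \<noteq> 0" using qp[OF i] by fastforce
          then show "p i x = p i x / q i x * q i x" by simp
        qed
      qed
      also have "\<dots> = (LINT x:X|\<mu> 1. (p i x / q i x) * q 1 x)"
      proof (cases "i = 1")
        case True
        then show ?thesis by simp
      next
        case False
        then have i2: "i \<in> {2..t}" using i by auto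
        show ?thesis
          by (rule dens_lemma[OF M1 Mi X_compact qc[OF one] qc[OF i] _ _ _ pqc[OF i]])
            (use qp[OF one] qp[OF i] one i mom i2 in \<open>auto intro: less_imp_le\<close>)
      qed
      finally show ?thesis .
    qed
    have "s = (\<Sum>i=1..t. (LINT x:X|\<mu> 1. (p i x / q i x) * q 1 x))"
      unfolding s_eq using each by simp
    also have "\<dots> = (LINT x:X|\<mu> 1. (\<Sum>i=1..t. (p i x / q i x) * q 1 x))"
    proof (rule set_integral_sum_cont[OF M1 X_compact, symmetric])
      show "\<forall>i\<in>{1..t}. continuous_on X (\<lambda>x. p i x / q i x * q 1 x)"
        using continuous_on_mult[OF pqc qc[OF one]] by blast
    qed simp
    also have "\<dots> = (LINT x:X|\<mu> 1. ?F x * q 1 x)"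
      by (simp add: sum_distrib_right)
    finally have s2: "s = (LINT x:X|\<mu> 1. ?F x * q 1 x)" .
    have "(LINT x:X|\<mu> 1. ?F x0 * q 1 x) \<le> (LINT x:X|\<mu> 1. ?F x * q 1 x)"
    proof (rule set_integral_mono)
      show "set_integrable (\<mu> 1) X (\<lambda>x. ?F x0 * q 1 x)"
        by (intro set_integrable_cont[OF M1 X_compact] continuous_on_mult continuous_on_const qc[OF one])
      show "set_integrable (\<mu> 1) X (\<lambda>x. ?F x * q 1 x)"
        by (intro set_integrable_cont[OF M1 X_compact] continuous_on_mult Fc qc[OF one])
      fix x assume "x \<in> X"
      then show "?F x0 * q 1 x \<le> ?F x * q 1 x"
        using x0min qp[OF one] one by (intro mult_right_mono) (auto intro: less_imp_le)
    qed
    then show ?thesis using s2 norm1 by simp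
  qed
  have L: "Inf ?S = ?F x0"
    by (rule cInf_eq_minimum[OF mem low])
  show ?thesis using L R by simp
qed


end
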